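(* Let $(N,v)$ be a balanced game such that $\mathscr{F}:=\mathscr{VE}(N,v)$ is core-describing. If $(N,v)$ is $\mathscr{F}$-weakly extendable, then $(N,v)$ has a nonempty and stable core.
   Context: A game $(N,v)$: $N$ finite nonempty, $v:2^N\to\mathbb{R}$, $v(\varnothing)=0$; $x(S)=\sum_{i\in S}x_i$. Preimputations $X(N,v)=\{x\mid x(N)=v(N)\}$; imputations $I(N,v)=\{x\in X(N,v)\mid x_i\ge v(\{i\})\ \forall i\}$; core $C(N,v)=\{x\in X(N,v)\mid x(S)\ge v(S)\ \forall S\subseteq N\}$; balanced means nonempty core. For a coalition $S$, $C(S,v)=\{y\in\mathbb{R}^S\mid y(S)=v(S),\ y(T)\ge v(T)\ \forall T\subseteq S\}$. $x$ dominates $y$ via $S$ if $x(S)\le v(S)$ and $x_i>y_i$ for all $i\in S$. A set $U\subseteq I(N,v)$ is stable if no element of $U$ dominates another element of $U$ and every $y\in I(N,v)\setminus U$ is dominated by some $x\in U$. $S$ is strictly vital-exact if some $x\in C(N,v)$ has $x(S)=v(S)$ and $x(T)>v(T)$ for all $\varnothing\ne T\subsetneq S$; $\mathscr{VE}(N,v)$ is the set of these. $\mathscr{F}$ is core-describing if $C(N,v)=\{x\in X(N,v)\mid x(S)\ge v(S)\ \forall S\in\mathscr{F}\}$. For $\mathscr{S}\subseteq\mathscr{F}$, $\mathscr{S}$ is $\mathscr{F}$-feasible if $\{x\in X(N,v)\mid x(S)<v(S)\ \forall S\in\mathscr{S},\ x(T)\ge v(T)\ \forall T\in\mathscr{F}\setminus\mathscr{S}\}\neq\varnothing$.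 A coalition $S$ is extendable if for every $y\in C(S,v)$ there is $x\in C(N,v)$ with $x_i=y_i$ for all $i\in S$. The game is $\mathscr{F}$-weakly extendable if every nonempty $\mathscr{F}$-feasible collection contains an inclusion-minimal element (minimal within that collection) which is extendable. *)

theory Defs
  imports "HOL-Analysis.Analysis"
begin

(* A TU game on the finite nonempty player set N with characteristic function v,
   v {} = 0.  Payoff vectors in R^S are represented as functions 'a => real
   that vanish outside S. *)

definition game :: "'a set \<Rightarrow> ('a set \<Rightarrow> real) \<Rightarrow> bool" where
  "game N v \<longleftrightarrow> finite N \<and> N \<noteq> {} \<and> v {} = 0"

definition vecs :: "'a set \<Rightarrow> ('a \<Rightarrow> real) set" where
  "vecs S = {x. \<forall>i. i \<notin> S \<longrightarrow> x i = 0}"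

definition xs :: "('a \<Rightarrow> real) \<Rightarrow> 'a set \<Rightarrow> real" where
  "xs x S = (\<Sum>i\<in>S. x i)"

definition preimputations :: "'a set \<Rightarrow> ('a set \<Rightarrow> real) \<Rightarrow> ('a \<Rightarrow> real) set" where
  "preimputations N v = {x \<in> vecs N. xs x N = v N}"

definition imputations :: "'a set \<Rightarrow> ('a set \<Rightarrow> real) \<Rightarrow> ('a \<Rightarrow> real) set" where
  "imputations N v = {x \<in> preimputations N v. \<forall>i\<in>N. x i \<ge> v {i}}"

definition core :: "'a set \<Rightarrow> ('a set \<Rightarrow> real) \<Rightarrow> ('a \<Rightarrow> real) set" where
  "core S v = {y \<in> vecs S. xs y S = v S \<and> (\<forall>T. T \<subseteq> S \<longrightarrow> xs y T \<ge> v T)}"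

definition balanced :: "'a set \<Rightarrow> ('a set \<Rightarrow> real) \<Rightarrow> bool" where
  "balanced N v \<longleftrightarrow> core N v \<noteq> {}"

definition dominates_via :: "'a set \<Rightarrow> ('a set \<Rightarrow> real) \<Rightarrow> 'a set
    \<Rightarrow> ('a \<Rightarrow> real) \<Rightarrow> ('a \<Rightarrow> real) \<Rightarrow> bool" where
  "dominates_via N v S x y \<longleftrightarrow> S \<noteq> {} \<and> S \<subseteq> N \<and> xs x S \<le> v S \<and> (\<forall>i\<in>S. x i > y i)"

definition dominates :: "'a set \<Rightarrow> ('a set \<Rightarrow> real) \<Rightarrow> ('a \<Rightarrow> real) \<Rightarrow> ('a \<Rightarrow> real) \<Rightarrow> bool" where
  "dominates N v x y \<longleftrightarrow> (\<exists>S. dominates_via N v S x y)"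

definition stable :: "'a set \<Rightarrow> ('a set \<Rightarrow> real) \<Rightarrow> ('a \<Rightarrow> real) set \<Rightarrow> bool" where
  "stable N v U \<longleftrightarrow> U \<subseteq> imputations N v
     \<and> (\<forall>x\<in>U. \<forall>y\<in>U. \<not> dominates N v x y)
     \<and> (\<forall>y\<in>imputations N v - U. \<exists>x\<in>U. dominates N v x y)"

definition strictly_vital_exact :: "'a set \<Rightarrow> ('a set \<Rightarrow> real) \<Rightarrow> 'a set \<Rightarrow> bool" where
  "strictly_vital_exact N v S \<longleftrightarrow> S \<noteq> {} \<and> S \<subseteq> N \<and>
     (\<exists>x\<in>core N v. xs x S = v S \<and> (\<forall>T. T \<noteq> {} \<and> T \<subset> S \<longrightarrow> xs x T > v T))"

definition VE :: "'a set \<Rightarrow> ('a set \<Rightarrow> real) \<Rightarrow> 'a set set" where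
  "VE N v = {S. strictly_vital_exact N v S}"

definition core_describing :: "'a set \<Rightarrow> ('a set \<Rightarrow> real) \<Rightarrow> 'a set set \<Rightarrow> bool" where
  "core_describing N v F \<longleftrightarrow> F \<subseteq> Pow N \<and>
     core N v = {x \<in> preimputations N v. \<forall>S\<in>F. xs x S \<ge> v S}"

definition feasible :: "'a set \<Rightarrow> ('a set \<Rightarrow> real) \<Rightarrow> 'a set set \<Rightarrow> 'a set set \<Rightarrow> bool" where
  "feasible N v F \<SS> \<longleftrightarrow> \<SS> \<subseteq> F \<and>
     {x \<in> preimputations N v. (\<forall>S\<in>\<SS>. xs x S < v S) \<and> (\<forall>T\<in>F - \<SS>. xs x T \<ge> v T)} \<noteq> {}"

definition extendable :: "'a set \<Rightarrow> ('a set \<Rightarrow> real) \<Rightarrow> 'a set \<Rightarrow> bool" where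
  "extendable N v S \<longleftrightarrow> (\<forall>y\<in>core S v. \<exists>x\<in>core N v. \<forall>i\<in>S. x i = y i)"

definition weakly_extendable :: "'a set \<Rightarrow> ('a set \<Rightarrow> real) \<Rightarrow> 'a set set \<Rightarrow> bool" where
  "weakly_extendable N v F \<longleftrightarrow> (\<forall>\<SS>. feasible N v F \<SS> \<and> \<SS> \<noteq> {} \<longrightarrow>
     (\<exists>S\<in>\<SS>. (\<forall>T\<in>\<SS>. \<not> T \<subset> S) \<and> extendable N v S))"

end

theory Submission
  imports Defs
begin

lemma xs_empty[simp]: "xs x {} = 0" by (simp add: xs_def)

lemma exit_lemma:
  assumes fin: "finite S"
    and zc: "z \<in> core N v" and SN: "S \<subseteq> N"
    and zS: "xs z S = v S"
    and zstrict: "\<And>T. T \<noteq> {} \<Longrightarrow> T \<subset> S \<Longrightarrow> xs z T > v T"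
    and uS: "xs u S = v S"
    and uF: "\<And>T. T \<in> VE N v \<Longrightarrow> T \<subset> S \<Longrightarrow> xs u T \<ge> v T"
    and ext: "extendable N v S"
    and v0: "v {} = 0"
  shows "\<forall>T. T \<subseteq> S \<longrightarrow> xs u T \<ge> v T"
proof (rule ccontr)
  assume neg: "\<not> (\<forall>T. T \<subseteq> S \<longrightarrow> xs u T \<ge> v T)"
  define B where "B = {T. T \<subseteq> S \<and> xs u T < v T}"
  have Bne: "B \<noteq> {}" using neg unfolding B_def by auto
  have finB: "finite B" unfolding B_def using fin by simp
  have Bprop: "T \<noteq> {} \<and> T \<subset> S" if "T \<in> B" for T
  proof -
    from that have "T \<subseteq> S" "xs u T < v T" by (auto simp: B_def)
    then show ?thesis using v0 uS by auto
  qed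
  have zgt: "xs z T > v T" if "T \<in> B" for T using Bprop[OF that] zstrict by auto
  have ult: "xs u T < v T" if "T \<in> B" for T using that by (auto simp: B_def)
  define r where "r T = (xs z T - v T) / (xs z T - xs u T)" for T
  define t where "t = Min (r ` B)"
  have rpos: "r T > 0 \<and> r T < 1" if "T \<in> B" for T
    using zgt[OF that] ult[OF that] unfolding r_def by (simp add: divide_less_eq)
  have "t \<in> r ` B" unfolding t_def using finB Bne by (intro Min_in) auto
  then obtain T0 where T0: "T0 \<in> B" "t = r T0" by blast
  have tle: "t \<le> r T" if "T \<in> B" for T using finB that unfolding t_def by simp
  have t01: "0 < t" "t < 1" using rpos[OF T0(1)] T0(2) by auto
  define q where "q i = (if i \<in> S then z i + t * (u i - z i) else 0)" for i
  have xsq: "xs q T = xs z T + t * (xs u T - xs z T)" if "T \<subseteq> S" for T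
  proof -
    have "xs q T = (\<Sum>i\<in>T. z i + t * (u i - z i))"
      unfolding xs_def q_def using that by (intro sum.cong) auto
    also have "\<dots> = xs z T + t * (xs u T - xs z T)"
      by (simp add: xs_def sum.distrib sum_distrib_left sum_subtractf algebra_simps)
    finally show ?thesis .
  qed
  have qge: "xs q T \<ge> v T" if "T \<subseteq> S" for T
  proof (cases "T \<in> B")
    case True
    have d: "xs z T - xs u T > 0" "xs z T - v T > 0" using zgt[OF True] ult[OF True] by auto
    from tle[OF True] have "t * (xs z T - xs u T) \<le> xs z T - v T"
      unfolding r_def using d by (simp add: le_divide_eq)
    then show ?thesis using xsq[OF that] by (simp add: algebra_simps)
  next
    case False
    then have a: "xs u T \<ge> v T" using that by (auto simp: B_def)
    have b: "xs z T \<ge> v T" using zc that SN by (auto simp: core_def)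
    have c1: "t * (xs u T - v T) \<ge> 0" using a t01 by simp
    have c2: "(1 - t) * (xs z T - v T) \<ge> 0" using b t01 by simp
    show ?thesis using xsq[OF that] c1 c2 by (simp add: algebra_simps)
  qed
  have qT0: "xs q T0 = v T0"
  proof -
    have d: "xs z T0 - xs u T0 > 0" using zgt[OF T0(1)] ult[OF T0(1)] by auto
    have "t * (xs z T0 - xs u T0) = xs z T0 - v T0"
      using T0(2) d unfolding r_def by simp
    moreover have "T0 \<subseteq> S" using Bprop[OF T0(1)] by auto
    ultimately show ?thesis using xsq[of T0] by (simp add: algebra_simps)
  qed
  define Tt where "Tt = {T. T \<noteq> {} \<and> T \<subset> S \<and> xs q T = v T}"
  have "T0 \<in> Tt" using qT0 Bprop[OF T0(1)] unfolding Tt_def by auto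
  then obtain R where R: "R \<in> Tt" and Rmin: "\<And>T. T \<in> Tt \<Longrightarrow> card R \<le> card T"
    using ex_has_least_nat[of "\<lambda>T. T \<in> Tt" T0 card] by blast
  have RS: "R \<noteq> {}" "R \<subset> S" "xs q R = v R" using R by (auto simp: Tt_def)
  have uR: "xs u R < v R"
  proof (rule ccontr)
    assume "\<not> xs u R < v R"
    then have a: "xs u R \<ge> v R" by simp
    have b: "xs z R > v R" using RS zstrict by auto
    have c1: "t * (xs u R - v R) \<ge> 0" using a t01 by simp
    have c2: "(1 - t) * (xs z R - v R) > 0" using b t01 by simp
    have "xs q R > v R" using xsq[of R] RS c1 c2 by (simp add: algebra_simps)
    with RS show False by simp
  qed
  have qc: "q \<in> core S v"
  proof -
    have "xs q S = v S" using xsq[of S] zS uS by simp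
    then show ?thesis unfolding core_def vecs_def using qge by (auto simp: q_def)
  qed
  obtain x where xc: "x \<in> core N v" and xq: "\<forall>i\<in>S. x i = q i"
    using ext qc unfolding extendable_def by blast
  have xsx: "xs x T = xs q T" if "T \<subseteq> S" for T
    unfolding xs_def using that xq by (intro sum.cong) auto
  have finR: "finite R" using fin RS(2) finite_subset by blast
  have "R \<in> VE N v"
    unfolding VE_def strictly_vital_exact_def
  proof (intro CollectI conjI bexI[of _ x])
    show "R \<noteq> {}" using RS by simp
    show "R \<subseteq> N" using RS SN by auto
    show "x \<in> core N v" by (rule xc)
    show "xs x R = v R" using xsx[of R] RS by auto
    show "\<forall>T. T \<noteq> {} \<and> T \<subset> R \<longrightarrow> v T < xs x T"
    proof (intro allI impI)
      fix T assume T: "T \<noteq> {} \<and> T \<subset> R"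
      then have TS: "T \<subset> S" using RS by auto
      have ge: "xs q T \<ge> v T" using qge TS by auto
      have "xs q T \<noteq> v T"
      proof
        assume "xs q T = v T"
        then have "T \<in> Tt" using T TS unfolding Tt_def by auto
        then have "card R \<le> card T" by (rule Rmin)
        moreover have "card T < card R" using T finR by (simp add: psubset_card_mono)
        ultimately show False by simp
      qed
      then show "v T < xs x T" using ge xsx[of T] TS by auto
    qed
  qed
  then have "xs u R \<ge> v R" using uF RS by auto
  with uR show False by simp
qed

theorem proposition7p4:
  fixes N :: "'a set" and v :: "'a set \<Rightarrow> real"
  assumes "game N v"
    and "balanced N v"
    and "core_describing N v (VE N v)"
    and "weakly_extendable N v (VE N v)"
  shows "core N v \<noteq> {} \<and> stable N v (core N v)"
proof -
  from assms(1) have finN: "finite N" and v0: "v {} = 0" by (auto simp: game_def)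
  have cne: "core N v \<noteq> {}" using assms(2) by (simp add: balanced_def)
  have sub: "core N v \<subseteq> imputations N v"
  proof
    fix x assume x: "x \<in> core N v"
    have "x i \<ge> v {i}" if "i \<in> N" for i
    proof -
      have "xs x {i} \<ge> v {i}" using x that by (auto simp: core_def)
      then show ?thesis by (simp add: xs_def)
    qed
    then show "x \<in> imputations N v" using x
      by (auto simp: imputations_def preimputations_def core_def)
  qed
  have intst: "\<forall>x\<in>core N v. \<forall>y\<in>core N v. \<not> dominates N v x y"
  proof (intro ballI notI)
    fix x y assume x: "x \<in> core N v" and y: "y \<in> core N v" and "dominates N v x y"
    then obtain S where S: "S \<noteq> {}" "S \<subseteq> N" "xs x S \<le> v S" "\<forall>i\<in>S. x i > y i"
      by (auto simp: dominates_def dominates_via_def)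
    have fin: "finite S" using finN S(2) finite_subset by blast
    have "xs y S < xs x S" unfolding xs_def using sum_strict_mono[OF fin S(1)] S(4) by auto
    moreover have "xs y S \<ge> v S" using y S(2) by (auto simp: core_def)
    ultimately show False using S(3) by simp
  qed
  have extst: "\<forall>y\<in>imputations N v - core N v. \<exists>x\<in>core N v. dominates N v x y"
  proof
    fix y assume y: "y \<in> imputations N v - core N v"
    then have yp: "y \<in> preimputations N v" and ync: "y \<notin> core N v"
      by (auto simp: imputations_def)
    define F where "F = VE N v"
    define SS where "SS = {S \<in> F. xs y S < v S}"
    have feas: "feasible N v F SS"
      unfolding feasible_def SS_def using yp by auto
    have SSne: "SS \<noteq> {}"
    proof
      assume "SS = {}"
      then have "\<forall>S\<in>F. xs y S \<ge> v S" by (auto simp: SS_def not_less)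
      then have "y \<in> core N v" using assms(3) yp unfolding core_describing_def F_def by auto
      with ync show False by simp
    qed
    obtain S where S: "S \<in> SS" "\<forall>T\<in>SS. \<not> T \<subset> S" "extendable N v S"
      using assms(4) feas SSne unfolding weakly_extendable_def F_def by blast
    from S(1) have SVE: "strictly_vital_exact N v S" and yS: "xs y S < v S"
      by (auto simp: SS_def F_def VE_def)
    then obtain z where Sne: "S \<noteq> {}" and SN: "S \<subseteq> N" and zc: "z \<in> core N v"
      and zS: "xs z S = v S" and zstr: "\<forall>T. T \<noteq> {} \<and> T \<subset> S \<longrightarrow> xs z T > v T"
      unfolding strictly_vital_exact_def by blast
    have finS: "finite S" using finN SN finite_subset by blast
    define d where "d = (v S - xs y S) / card S"
    have cardpos: "card S > 0" using finS Sne by (simp add: card_gt_0_iff)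
    have dpos: "d > 0" using yS cardpos by (simp add: d_def)
    define u where "u i = (if i \<in> S then y i + d else 0)" for i
    have xsu: "xs u T = xs y T + d * card T" if "T \<subseteq> S" for T
    proof -
      have "xs u T = (\<Sum>i\<in>T. y i + d)" unfolding xs_def u_def using that by (intro sum.cong) auto
      also have "\<dots> = xs y T + d * card T" by (simp add: xs_def sum.distrib)
      finally show ?thesis .
    qed
    have uS: "xs u S = v S" using xsu[of S] cardpos by (simp add: d_def)
    have uF: "xs u T \<ge> v T" if "T \<in> VE N v" "T \<subset> S" for T
    proof -
      have "T \<notin> SS" using S(2) that(2) by blast
      then have "xs y T \<ge> v T" using that(1) by (auto simp: SS_def F_def)
      moreover have "d * card T \<ge> 0" using dpos by simp
      ultimately show ?thesis using xsu[of T] that(2) by auto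
    qed
    have uall: "\<forall>T. T \<subseteq> S \<longrightarrow> xs u T \<ge> v T"
      by (rule exit_lemma[OF finS zc SN zS _ uS uF S(3) v0]) (use zstr in auto)
    have uc: "u \<in> core S v" unfolding core_def vecs_def using uS uall by (auto simp: u_def)
    then obtain x where xc: "x \<in> core N v" and xu: "\<forall>i\<in>S. x i = u i"
      using S(3) unfolding extendable_def by blast
    have "xs x S = xs u S" unfolding xs_def using xu by (intro sum.cong) auto
    then have "dominates_via N v S x y" unfolding dominates_via_def
      using Sne SN uS xu dpos by (auto simp: u_def)
    then show "\<exists>x\<in>core N v. dominates N v x y" using xc dominates_def by blast
  qed
  show ?thesis using cne sub intst extst unfolding stable_def by blast
qed

end
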